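(* Let $A$ be an aperiodic binary sequence of length $n\ge 2$. Then every binary $k'$-stage machine that generates $A$ satisfies $k'\ge k$, where \[ k=\max\bigl(\lceil \log_2 wt(A)\rceil,\ \lceil \log_2 (n-wt(A))\rceil\bigr)+1 . \] Consequently (together with the existence of a generating binary $k$-stage machine) $k$ is exactly the minimum number of stages of a binary machine generating $A$.
   Context: A binary sequence of length $n$ is an $n$-tuple $A=(a_0,\ldots,a_{n-1})\in\{0,1\}^n$; its Hamming weight $wt(A)$ is the number of 1s. $A$ is called aperiodic if it is not of the form $B B\cdots B$ ($m\ge 2$ copies) for a shorter binary sequence $B$. A binary $k$-stage machine consists of $k$ stages $0,1,\ldots,k-1$, each holding one bit; its state is the vector $(x_{k-1},\ldots,x_1,x_0)\in\{0,1\}^k$. Each stage $j$ has its own arbitrary Boolean next-state function $f_j:\{0,1\}^k\to\{0,1\}$ (arbitrary feedback and feedforward dependencies allowed), and at each clock step the state $x$ is replaced by $(f_{k-1}(x),\ldots,f_0(x))$. The output at each time step is the content of stage $0$. The machine generates $A$ if for some initial state the output sequence is the periodic sequence $a_0,a_1,\ldots,a_{n-1},a_0,a_1,\ldots$. *)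

theory Defs
  imports Complex_Main
begin

text \<open>Binary sequences are lists of booleans (True = 1).\<close>

definition wt :: "bool list \<Rightarrow> nat" where
  "wt A = length (filter id A)"

definition aperiodic :: "bool list \<Rightarrow> bool" where
  "aperiodic A \<longleftrightarrow> \<not> (\<exists>B m. m \<ge> 2 \<and> A = concat (replicate m B))"

text \<open>A binary k-stage machine is given by next-state functions f j (j < k),
  each an arbitrary Boolean function of the whole state. A state is a bool list
  of length k whose j-th entry is the content of stage j.\<close>

definition mstep :: "nat \<Rightarrow> (nat \<Rightarrow> bool list \<Rightarrow> bool) \<Rightarrow> bool list \<Rightarrow> bool list" where
  "mstep k f x = map (\<lambda>j. f j x) [0..<k]"

definition generates :: "nat \<Rightarrow> (nat \<Rightarrow> bool list \<Rightarrow> bool) \<Rightarrow> bool list \<Rightarrow> bool" where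
  "generates k f A \<longleftrightarrow> 0 < k \<and> A \<noteq> [] \<and>
     (\<exists>s. length s = k \<and> (\<forall>t. ((mstep k f) ^^ t) s ! 0 = A ! (t mod length A)))"

end

theory Submission
  imports Defs
begin

lemma concat_rep_nth:
  assumes "length B = p" "p > 0"
  shows "i < m * p \<Longrightarrow> concat (replicate m B) ! i = B ! (i mod p)"
proof (induction m arbitrary: i)
  case 0 then show ?case by simp
next
  case (Suc m)
  show ?case
  proof (cases "i < p")
    case True then show ?thesis using assms by (simp add: nth_append)
  next
    case False
    then have "i - p < m * p" using Suc.prems by simp
    then have "concat (replicate m B) ! (i - p) = B ! ((i - p) mod p)" using Suc.IH by blast
    moreover have "(i - p) mod p = i mod p" using False by (simp add: mod_if)
    ultimately show ?thesis using assms False by (simp add: nth_append)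
  qed
qed

lemma log_bound:
  assumes "w \<le> (2::nat) ^ (k - 1)" "k > 0"
  shows "\<lceil>log 2 (real w)\<rceil> \<le> int k - 1"
proof (cases "w = 0")
  case True then show ?thesis using assms by (simp add: log_def)
next
  case False
  have "log 2 (real w) \<le> log 2 (2 ^ (k - 1))"
    using assms False by (subst log_le_cancel_iff) (auto simp flip: of_nat_power)
  also have "\<dots> = real (k - 1)" by (simp add: log_nat_power)
  finally have "\<lceil>log 2 (real w)\<rceil> \<le> int (k - 1)"
    by (simp add: ceiling_le_iff)
  then show ?thesis using assms by simp
qed

theorem theorem2:
  fixes A :: "bool list" and k' :: nat and f :: "nat \<Rightarrow> bool list \<Rightarrow> bool"
  assumes "length A \<ge> 2"
    and "aperiodic A"
    and "generates k' f A"
  shows "int k' \<ge> max \<lceil>log 2 (real (wt A))\<rceil> \<lceil>log 2 (real (length A - wt A))\<rceil> + 1"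
proof -
  define n where "n = length A"
  define g where "g = mstep k' f"
  have kpos: "k' > 0" using assms(3) unfolding generates_def by blast
  obtain s where s: "length s = k'" and out: "\<And>t. (g ^^ t) s ! 0 = A ! (t mod n)"
    using assms(3) unfolding generates_def g_def n_def by blast
  define x where "x t = (g ^^ t) s" for t
  have xlen: "length (x t) = k'" for t
    by (cases t) (auto simp: x_def g_def mstep_def s)
  have xshift: "x (t + a) = x (u + a)" if "x t = x u" for t u a
    using that by (induction a) (auto simp: x_def)
  have inj: "inj_on x {..<n}"
  proof (rule ccontr)
    assume "\<not> inj_on x {..<n}"
    then obtain i j where ij: "i < j" "j < n" "x i = x j"
      unfolding inj_on_def by (metis lessThan_iff nat_neq_iff)
    define d where "d = j - i"
    have dpos: "d > 0" "d < n" using ij by (auto simp: d_def)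
    have per1: "x (t + d) = x t" if "t \<ge> i" for t
    proof -
      have "x (j + (t - i)) = x (i + (t - i))" using xshift ij(3) by metis
      then show ?thesis using that ij by (simp add: d_def add.commute)
    qed
    have perA: "A ! ((t + d) mod n) = A ! (t mod n)" for t
    proof -
      have "A ! ((t + d) mod n) = A ! ((t + n * i + d) mod n)" by (metis mod_mult_self2 add.commute add.assoc)
      also have "\<dots> = x (t + n * i + d) ! 0" using out by (simp add: x_def)
      also have "\<dots> = x (t + n * i) ! 0"
      proof -
        have "n \<ge> 1" using dpos by simp
        then have "i \<le> n * i" using mult_le_mono1[of 1 n i] by simp
        then have "t + n * i \<ge> i" by linarith
        then show ?thesis using per1 by simp
      qed
      also have "\<dots> = A ! ((t + n * i) mod n)" using out by (simp add: x_def)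
      also have "\<dots> = A ! (t mod n)" by simp
      finally show ?thesis .
    qed
    have perAm: "A ! ((t + d * q) mod n) = A ! (t mod n)" for t q
    proof (induction q)
      case 0 then show ?case by simp
    next
      case (Suc q)
      have "A ! ((t + d * Suc q) mod n) = A ! ((t + d * q + d) mod n)" by (simp add: algebra_simps)
      also have "\<dots> = A ! ((t + d * q) mod n)" by (rule perA)
      finally show ?case using Suc by simp
    qed
    define p where "p = gcd d n"
    obtain a b where ab: "d * a = n * b + p"
      using bezout_nat[of d n] dpos unfolding p_def by auto
    have ppos: "p > 0" "p < n" "p dvd n"
      using dpos by (auto simp: p_def intro: le_less_trans[OF gcd_le1_nat])
    have perP: "A ! ((t + p) mod n) = A ! (t mod n)" for t
    proof -
      have "A ! ((t + p) mod n) = A ! ((t + p + n * b) mod n)" by simp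
      also have "t + p + n * b = t + d * a" using ab by simp
      finally show ?thesis using perAm by simp
    qed
    have perPm: "A ! ((t + p * q) mod n) = A ! (t mod n)" for t q
    proof (induction q)
      case 0 then show ?case by simp
    next
      case (Suc q)
      have "A ! ((t + p * Suc q) mod n) = A ! ((t + p * q + p) mod n)" by (simp add: algebra_simps)
      also have "\<dots> = A ! ((t + p * q) mod n)" by (rule perP)
      finally show ?case using Suc by simp
    qed
    define m where "m = n div p"
    have mp: "m * p = n" using ppos by (simp add: m_def)
    have m2: "m \<ge> 2"
    proof (rule ccontr)
      assume "\<not> m \<ge> 2"
      then have "m \<le> 1" by simp
      then have "m * p \<le> p" by simp
      then show False using mp ppos by simp
    qed
    have "A = concat (replicate m (take p A))"
    proof (rule nth_equalityI)
      show "length A = length (concat (replicate m (take p A)))"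
        using ppos mp by (simp add: length_concat sum_list_replicate n_def[symmetric] min_def)
    next
      fix i assume i: "i < length A"
      have "concat (replicate m (take p A)) ! i = take p A ! (i mod p)"
        using concat_rep_nth[of "take p A" p i m] ppos i mp by (simp add: n_def min_def)
      also have "\<dots> = A ! (i mod p)" using ppos by simp
      also have "\<dots> = A ! ((i mod p) mod n)" proof -
        have "i mod p < n" using ppos by (meson mod_less_divisor less_trans)
        then show ?thesis by simp
      qed
      also have "\<dots> = A ! ((i mod p + p * (i div p)) mod n)" by (rule perPm[symmetric])
      also have "\<dots> = A ! (i mod n)" by simp
      also have "\<dots> = A ! i" using i by (simp add: n_def)
      finally show "A ! i = concat (replicate m (take p A)) ! i" by simp
    qed
    then show False using assms(2) m2 unfolding aperiodic_def by blast
  qed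
  have cnt: "card {t. t < n \<and> A ! t = c} \<le> 2 ^ (k' - 1)" for c
  proof -
    let ?S = "{t. t < n \<and> A ! t = c}"
    have "card ?S = card (x ` ?S)"
      by (rule card_image[symmetric]) (rule inj_on_subset[OF inj], auto)
    also have "x ` ?S \<subseteq> (\<lambda>ys. c # ys) ` {ys. set ys \<subseteq> UNIV \<and> length ys = k' - 1}"
    proof
      fix z assume "z \<in> x ` ?S"
      then obtain t where t: "t < n" "A ! t = c" "z = x t" by auto
      have "z ! 0 = c" using t out by (simp add: x_def)
      moreover have "length z = k'" using t xlen by simp
      ultimately have "z = c # tl z" "length (tl z) = k' - 1" using kpos
        by (cases z; simp)+
      then show "z \<in> (\<lambda>ys. c # ys) ` {ys. set ys \<subseteq> UNIV \<and> length ys = k' - 1}" by blast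
    qed
    then have "card (x ` ?S) \<le> card ((\<lambda>ys. c # ys) ` {ys. set ys \<subseteq> (UNIV::bool set) \<and> length ys = k' - 1})"
      by (intro card_mono finite_imageI finite_lists_length_eq) auto
    also have "\<dots> \<le> card {ys. set ys \<subseteq> (UNIV::bool set) \<and> length ys = k' - 1}" by (rule card_image_le) (intro finite_lists_length_eq, simp)
    also have "\<dots> = 2 ^ (k' - 1)" by (subst card_lists_length_eq) simp_all
    finally show ?thesis .
  qed
  have w1: "wt A = card {t. t < n \<and> A ! t = True}"
    by (simp add: wt_def length_filter_conv_card n_def)
  have w2: "length A - wt A = card {t. t < n \<and> A ! t = False}"
  proof -
    have e: "length (filter id A) + length (filter (\<lambda>x. \<not> id x) A) = length A"
      by (rule sum_length_filter_compl)
    have "length (filter (\<lambda>x. \<not> id x) A) = card {t. t < n \<and> A ! t = False}"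
      unfolding length_filter_conv_card n_def by simp
    then show ?thesis using e unfolding wt_def by linarith
  qed
  have "\<lceil>log 2 (real (wt A))\<rceil> \<le> int k' - 1"
    using log_bound[OF _ kpos] cnt[of True] unfolding w1 by blast
  moreover have "\<lceil>log 2 (real (length A - wt A))\<rceil> \<le> int k' - 1"
    using log_bound[OF _ kpos] cnt[of False] unfolding w2 by blast
  ultimately show ?thesis by simp
qed

end
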